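(* Let $G$ be a connected graph of order $n\geq 2$. Then $\mathrm{ldim}_f(G)\geq \dfrac{n}{n-\mathrm{ldim}(G)+1}$.
   Context: All graphs are finite, simple and connected; $d$ is the shortest-path distance. For an edge $uv$, $L(uv)=\{x\in V(G): d(u,x)\neq d(v,x)\}$. A set $W\subseteq V(G)$ is a local resolving set if $W\cap L(uv)\neq\emptyset$ for every edge $uv$; $\mathrm{ldim}(G)$ is the minimum cardinality of a local resolving set. A function $f:V(G)\to[0,1]$ is a local resolving function if $\sum_{x\in L(uv)}f(x)\geq 1$ for every edge $uv$; $\mathrm{ldim}_f(G)$ is the minimum of $\sum_v f(v)$ over all local resolving functions. *)

theory Defs
  imports Main "HOL-Library.Extended_Real" Complex_Main
begin

definition simple_graph :: "'a set \<Rightarrow> ('a \<Rightarrow> 'a \<Rightarrow> bool) \<Rightarrow> bool" where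
  "simple_graph V E \<longleftrightarrow> finite V \<and> (\<forall>u v. E u v \<longrightarrow> u \<in> V \<and> v \<in> V)
     \<and> (\<forall>u v. E u v \<longrightarrow> E v u) \<and> (\<forall>u. \<not> E u u)"

fun walk :: "('a \<Rightarrow> 'a \<Rightarrow> bool) \<Rightarrow> 'a list \<Rightarrow> bool" where
  "walk E [] = False"
| "walk E [x] = True"
| "walk E (x # y # xs) = (E x y \<and> walk E (y # xs))"

definition connected_graph :: "'a set \<Rightarrow> ('a \<Rightarrow> 'a \<Rightarrow> bool) \<Rightarrow> bool" where
  "connected_graph V E \<longleftrightarrow> V \<noteq> {} \<and>
     (\<forall>u\<in>V. \<forall>v\<in>V. \<exists>xs. walk E xs \<and> set xs \<subseteq> V \<and> hd xs = u \<and> last xs = v)"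

definition gdist :: "'a set \<Rightarrow> ('a \<Rightarrow> 'a \<Rightarrow> bool) \<Rightarrow> 'a \<Rightarrow> 'a \<Rightarrow> nat" where
  "gdist V E u v = (LEAST k. \<exists>xs. walk E xs \<and> set xs \<subseteq> V \<and> hd xs = u \<and> last xs = v
                                 \<and> length xs = Suc k)"

definition Lset :: "'a set \<Rightarrow> ('a \<Rightarrow> 'a \<Rightarrow> bool) \<Rightarrow> 'a \<Rightarrow> 'a \<Rightarrow> 'a set" where
  "Lset V E u v = {x \<in> V. gdist V E u x \<noteq> gdist V E v x}"

definition local_resolving_set :: "'a set \<Rightarrow> ('a \<Rightarrow> 'a \<Rightarrow> bool) \<Rightarrow> 'a set \<Rightarrow> bool" where
  "local_resolving_set V E W \<longleftrightarrow> W \<subseteq> V \<and> (\<forall>u v. E u v \<longrightarrow> W \<inter> Lset V E u v \<noteq> {})"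

definition ldim :: "'a set \<Rightarrow> ('a \<Rightarrow> 'a \<Rightarrow> bool) \<Rightarrow> nat" where
  "ldim V E = Min (card ` {W. local_resolving_set V E W})"

definition local_resolving_function :: "'a set \<Rightarrow> ('a \<Rightarrow> 'a \<Rightarrow> bool) \<Rightarrow> ('a \<Rightarrow> real) \<Rightarrow> bool" where
  "local_resolving_function V E f \<longleftrightarrow> (\<forall>x\<in>V. 0 \<le> f x \<and> f x \<le> 1) \<and>
     (\<forall>u v. E u v \<longrightarrow> (\<Sum>x\<in>Lset V E u v. f x) \<ge> 1)"

text \<open>The minimum of the total weight over all local resolving functions
  (the infimum is attained since this is a linear program; we use Inf).\<close>
definition ldim_f :: "'a set \<Rightarrow> ('a \<Rightarrow> 'a \<Rightarrow> bool) \<Rightarrow> real" where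
  "ldim_f V E = Inf ((\<lambda>f. \<Sum>x\<in>V. f x) ` {f. local_resolving_function V E f})"

end

theory Submission
  imports Defs
begin

lemma walk_edge: "walk E xs \<Longrightarrow> hd xs \<noteq> last xs \<Longrightarrow> \<exists>a b. E a b"
  by (induction E xs rule: walk.induct) auto

lemma walk_hd_last: "walk E xs \<Longrightarrow> length xs = Suc 0 \<Longrightarrow> hd xs = last xs"
  by (cases xs) auto

lemma gdist_self: "u \<in> V \<Longrightarrow> gdist V E u u = 0"
  unfolding gdist_def
  by (rule Least_eq_0) (rule exI[of _ "[u]"], simp)

lemma gdist_pos:
  assumes "connected_graph V E" "u \<in> V" "v \<in> V" "u \<noteq> v"
  shows "gdist V E u v \<noteq> 0"
proof
  obtain xs where xs: "walk E xs" "set xs \<subseteq> V" "hd xs = u" "last xs = v"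
    using assms unfolding connected_graph_def by blast
  have "xs \<noteq> []" using xs(1) by auto
  then have "\<exists>ys. walk E ys \<and> set ys \<subseteq> V \<and> hd ys = u \<and> last ys = v \<and> length ys = Suc (length xs - 1)"
    using xs by (intro exI[of _ xs]) auto
  then have "\<exists>ys. walk E ys \<and> set ys \<subseteq> V \<and> hd ys = u \<and> last ys = v \<and> length ys = Suc (gdist V E u v)"
    unfolding gdist_def by (rule LeastI)
  moreover assume "gdist V E u v = 0"
  ultimately show False using walk_hd_last assms(4) by force
qed

lemma mem_L:
  assumes "simple_graph V E" "connected_graph V E" "E u v"
  shows "u \<in> Lset V E u v"
proof -
  have uv: "u \<in> V" "v \<in> V" "u \<noteq> v" using assms unfolding simple_graph_def by metis+
  show ?thesis unfolding Lset_def using gdist_self[OF uv(1), of E] gdist_pos[OF assms(2) uv(2) uv(1)] uv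
    by auto
qed

theorem theorem2p12:
  fixes V :: "'a set" and E :: "'a \<Rightarrow> 'a \<Rightarrow> bool"
  assumes "simple_graph V E" and "connected_graph V E" and "card V \<ge> 2"
  shows "ldim_f V E \<ge> real (card V) / (real (card V) - real (ldim V E) + 1)"
proof -
  define n where "n = card V"
  define k where "k = ldim V E"
  have fin: "finite V" using assms(1) unfolding simple_graph_def by auto
  have LV: "Lset V E u v \<subseteq> V" for u v unfolding Lset_def by auto
  have Vlrs: "local_resolving_set V E V"
    unfolding local_resolving_set_def using mem_L[OF assms(1,2)] LV by blast
  have cfin: "finite (card ` {W. local_resolving_set V E W})"
  proof -
    have "{W. local_resolving_set V E W} \<subseteq> Pow V" unfolding local_resolving_set_def by auto
    then show ?thesis using fin by (meson finite_Pow_iff finite_imageI finite_subset)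
  qed
  have kle: "k \<le> n" unfolding k_def n_def ldim_def
    using Vlrs cfin by (intro Min_le) auto
  have kmin: "\<not> local_resolving_set V E T" if "card T < k" for T
    using that cfin unfolding k_def ldim_def
    by (metis (mono_tags, lifting) Min_le image_eqI linorder_not_le mem_Collect_eq)
  obtain a b where ab: "a \<in> V" "b \<in> V" "a \<noteq> b"
    using assms(3) fin by (metis card_le_Suc0_iff_eq not_less_eq_eq numeral_2_eq_2)
  obtain xs where xs: "walk E xs" "hd xs = a" "last xs = b"
    using assms(2) ab unfolding connected_graph_def by blast
  obtain e1 e2 where e: "E e1 e2" using walk_edge[OF xs(1)] xs ab by auto
  have "\<not> local_resolving_set V E {}" unfolding local_resolving_set_def using e by auto
  have "k \<in> card ` {W. local_resolving_set V E W}" unfolding k_def ldim_def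
    using cfin Vlrs by (intro Min_in) auto
  then obtain W where W: "local_resolving_set V E W" "card W = k" by auto
  have "W \<subseteq> V" using W unfolding local_resolving_set_def by auto
  then have k1: "k \<ge> 1" using W \<open>\<not> local_resolving_set V E {}\<close> fin
    by (metis card_0_eq finite_subset less_one not_le)
  define j where "j = k - 1"
  have jn: "j < n" "n - j = n - k + 1" using k1 kle assms(3) unfolding j_def n_def by auto
  define \<T> where "\<T> = {T. T \<subseteq> V \<and> card T = j}"
  have cT: "card \<T> = n choose j" unfolding \<T>_def n_def using n_subsets[OF fin] by simp
  have fT: "finite \<T>" unfolding \<T>_def using fin by simp
  have bound: "(\<Sum>x\<in>V. f x) \<ge> real n / (real n - real k + 1)"
    if f: "local_resolving_function V E f" for f
  proof -
    have f0: "x \<in> V \<Longrightarrow> f x \<ge> 0" for x using f unfolding local_resolving_function_def by auto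
    have each: "(\<Sum>x\<in>{x\<in>V. x \<notin> T}. f x) \<ge> 1" if T: "T \<in> \<T>" for T
    proof -
      have "card T < k" using T k1 unfolding \<T>_def j_def by auto
      then have "\<not> local_resolving_set V E T" by (rule kmin)
      moreover have "T \<subseteq> V" using T unfolding \<T>_def by auto
      ultimately obtain u v where uv: "E u v" "T \<inter> Lset V E u v = {}"
        unfolding local_resolving_set_def by auto
      have "1 \<le> (\<Sum>x\<in>Lset V E u v. f x)" using f uv(1) unfolding local_resolving_function_def by auto
      also have "\<dots> \<le> (\<Sum>x\<in>{x\<in>V. x \<notin> T}. f x)"
        using uv(2) LV[of u v] fin f0 by (intro sum_mono2) auto
      finally show ?thesis .
    qed
    have "real (n choose j) = (\<Sum>T\<in>\<T>. (1::real))" using cT by simp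
    also have "\<dots> \<le> (\<Sum>T\<in>\<T>. \<Sum>x\<in>{x\<in>V. x \<notin> T}. f x)"
      using each by (intro sum_mono) auto
    also have "\<dots> = (\<Sum>x\<in>V. \<Sum>T\<in>{T\<in>\<T>. x \<notin> T}. f x)"
      using sum.swap_restrict[OF fT fin, of "\<lambda>T x. f x" "\<lambda>T x. x \<notin> T"] by simp
    also have "\<dots> = (\<Sum>x\<in>V. f x * real ((n - 1) choose j))"
    proof (intro sum.cong refl)
      fix x assume x: "x \<in> V"
      have "{T\<in>\<T>. x \<notin> T} = {T. T \<subseteq> V - {x} \<and> card T = j}" unfolding \<T>_def by auto
      then have "card {T\<in>\<T>. x \<notin> T} = (n - 1) choose j"
        using n_subsets[of "V - {x}" j] fin x unfolding n_def by simp
      then show "(\<Sum>T\<in>{T\<in>\<T>. x \<notin> T}. f x) = f x * real ((n - 1) choose j)" by simp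
    qed
    finally have A: "real (n choose j) \<le> (\<Sum>x\<in>V. f x) * real ((n - 1) choose j)"
      by (simp add: sum_distrib_right)
    have B: "real (n - j) * real (n choose j) = real n * real ((n - 1) choose j)"
      using binomial_absorb_comp[of n j] by (metis of_nat_mult)
    have pos: "real ((n - 1) choose j) > 0" using jn by simp
    have npos: "real n - real k + 1 > 0" using kle by simp
    have nj: "real (n - j) = real n - real k + 1" using jn kle k1 by simp
    have "real n * real ((n - 1) choose j) \<le> (real n - real k + 1) * ((\<Sum>x\<in>V. f x) * real ((n - 1) choose j))"
      using B A npos nj by (metis mult_left_mono less_imp_le)
    then have "real n \<le> (real n - real k + 1) * (\<Sum>x\<in>V. f x)"
    proof -
      have "real ((n - 1) choose j) * real n \<le> real ((n - 1) choose j) * ((real n - real k + 1) * (\<Sum>x\<in>V. f x))"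
        using \<open>real n * real ((n - 1) choose j) \<le> _\<close> by (simp add: algebra_simps)
      then show ?thesis using pos by (simp add: mult_le_cancel_left_pos)
    qed
    then show ?thesis using npos by (simp add: divide_simps mult.commute)
  qed
  have ne: "local_resolving_function V E (\<lambda>_. 1)"
    unfolding local_resolving_function_def
  proof (intro conjI allI impI ballI)
    fix u v assume "E u v"
    then have "u \<in> Lset V E u v" by (rule mem_L[OF assms(1,2)])
    then have "card (Lset V E u v) \<ge> 1" using LV fin
      by (metis One_nat_def Suc_leI card_gt_0_iff empty_iff finite_subset)
    then show "1 \<le> (\<Sum>x\<in>Lset V E u v. (1::real))" by simp
  qed auto
  show ?thesis unfolding ldim_f_def n_def[symmetric] k_def[symmetric]
    using ne bound by (intro cInf_greatest) auto
qed

end
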